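(* Let $q\in\mathbb{N}$, $q\ge1$, and let $F=(n_F)_{n\ge0}$ be defined by $0_F=0$, $1_F=1$, $2_F=q$, and $(j+2)_F=q\,(j+1)_F+j_F$ for $j\ge0$ (e.g. $q=2$ gives $1,2,5,12,29,70,\dots$ and $q=3$ gives $1,3,10,33,109,\dots$ from $n=1$). Then for all integers $0\le k<n$, the layer $\langle\Phi_{k+1}\to\Phi_n\rangle$ of the cobweb poset of $F$ (with $m=n-k$ levels) admits a tiling by blocks of type $\sigma P_m$.
   Context: Notation: $n_F\equiv F_n$. The cobweb poset of $F$ has, for each $s\ge1$, a level $\Phi_s$ consisting of $s_F$ distinct vertices (levels pairwise disjoint), plus a root level $\Phi_0$ with one vertex; for $x\in\Phi_i$, $y\in\Phi_j$ one has $x<y$ iff $i<j$. For $1\le a\le b$, the layer $\langle\Phi_a\to\Phi_b\rangle$ is the subposet on $\Phi_a\cup\dots\cup\Phi_b$; it has $m=b-a+1$ levels and its maximal chains form the set $\Phi_a\times\dots\times\Phi_b$. For a permutation $\sigma$ of $\{1,\dots,m\}$, a block of type $\sigma P_m$ in this layer is the subposet induced on $V_a\cup\dots\cup V_b$ where $V_{a-1+i}\subseteq\Phi_{a-1+i}$ and $|V_{a-1+i}|=\sigma(i)_F$ for $i=1,\dots,m$; its maximal chains form the set $V_a\times\dots\times V_b$. A tiling of the layer is a finite family of such blocks ($\sigma$ may vary from block to block) whose sets $V_a\times\dots\times V_b$ partition $\Phi_a\times\dots\times\Phi_b$ (pairwise max-disjoint and covering all maximal chains). *)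

theory Defs
  imports "HOL-Combinatorics.Permutations" "HOL-Library.FuncSet"
begin

fun Fq :: "nat \<Rightarrow> nat \<Rightarrow> nat" where
  "Fq q 0 = 0"
| "Fq q (Suc 0) = 1"
| "Fq q (Suc (Suc j)) = q * Fq q (Suc j) + Fq q j"

text \<open>Level Phi_s of the cobweb poset of F (s >= 1): s_F vertices, modelled as
  the indices 0..s_F-1 (levels are disjoint since a vertex is tagged by its level).\<close>
definition cobweb_level :: "(nat \<Rightarrow> nat) \<Rightarrow> nat \<Rightarrow> nat set" where
  "cobweb_level F s = {..<F s}"

definition layer_max_chains :: "(nat \<Rightarrow> nat) \<Rightarrow> nat \<Rightarrow> nat \<Rightarrow> (nat \<Rightarrow> nat) set" where
  "layer_max_chains F a b = (\<Pi>\<^sub>E s\<in>{a..b}. cobweb_level F s)"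

definition is_block :: "(nat \<Rightarrow> nat) \<Rightarrow> nat \<Rightarrow> nat \<Rightarrow> (nat \<Rightarrow> nat set) \<Rightarrow> bool" where
  "is_block F a b V \<longleftrightarrow>
     (\<exists>\<sigma>. \<sigma> permutes {1..b - a + 1} \<and>
        (\<forall>i\<in>{1..b - a + 1}. V (a - 1 + i) \<subseteq> cobweb_level F (a - 1 + i) \<and>
                              card (V (a - 1 + i)) = F (\<sigma> i)))"

definition block_chains :: "nat \<Rightarrow> nat \<Rightarrow> (nat \<Rightarrow> nat set) \<Rightarrow> (nat \<Rightarrow> nat) set" where
  "block_chains a b V = (\<Pi>\<^sub>E s\<in>{a..b}. V s)"

definition is_tiling :: "(nat \<Rightarrow> nat) \<Rightarrow> nat \<Rightarrow> nat \<Rightarrow> (nat \<Rightarrow> nat set) set \<Rightarrow> bool" where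
  "is_tiling F a b T \<longleftrightarrow>
     finite T \<and> (\<forall>V\<in>T. is_block F a b V) \<and>
     (\<forall>V\<in>T. \<forall>W\<in>T. V \<noteq> W \<longrightarrow> block_chains a b V \<inter> block_chains a b W = {}) \<and>
     (\<Union>V\<in>T. block_chains a b V) = layer_max_chains F a b"

end

theory Submission
  imports Defs
begin

definition blk :: "nat set \<Rightarrow> nat set \<Rightarrow> (nat \<Rightarrow> nat) \<Rightarrow> (nat \<Rightarrow> nat set) \<Rightarrow> bool" where
  "blk D J h V \<longleftrightarrow> (\<exists>g. bij_betw g D J \<and> (\<forall>s\<in>D. card (V s) = h (g s)))"

definition til :: "nat set \<Rightarrow> (nat \<Rightarrow> nat) set \<Rightarrow> nat set \<Rightarrow> (nat \<Rightarrow> nat) \<Rightarrow> (nat \<Rightarrow> nat set) set \<Rightarrow> bool" where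
  "til D R J h T \<longleftrightarrow> finite T \<and> (\<forall>V\<in>T. blk D J h V) \<and>
     (\<forall>V\<in>T. \<forall>W\<in>T. V \<noteq> W \<longrightarrow> PiE D V \<inter> PiE D W = {}) \<and> (\<Union>V\<in>T. PiE D V) = R"

lemma til_single: "blk D J h A \<Longrightarrow> til D (PiE D A) J h {A}"
  unfolding til_def by auto

lemma til_UN:
  assumes "finite I" "\<forall>i\<in>I. til D (R i) J h (T i)"
    "\<forall>i\<in>I. \<forall>j\<in>I. i \<noteq> j \<longrightarrow> R i \<inter> R j = {}"
  shows "til D (\<Union>i\<in>I. R i) J h (\<Union>i\<in>I. T i)"
  unfolding til_def
proof (intro conjI)
  show "finite (\<Union>i\<in>I. T i)" using assms unfolding til_def by auto
  show "\<forall>V\<in>\<Union>i\<in>I. T i. blk D J h V" using assms unfolding til_def by auto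
  have e: "\<forall>i\<in>I. (\<Union>V\<in>T i. PiE D V) = R i" using assms unfolding til_def by auto
  have "(\<Union>V\<in>\<Union>i\<in>I. T i. PiE D V) = (\<Union>i\<in>I. \<Union>V\<in>T i. PiE D V)" by blast
  also have "\<dots> = (\<Union>i\<in>I. R i)" using e by simp
  finally show "(\<Union>V\<in>\<Union>i\<in>I. T i. PiE D V) = (\<Union>i\<in>I. R i)" .
  show "\<forall>V\<in>\<Union>i\<in>I. T i. \<forall>W\<in>\<Union>i\<in>I. T i. V \<noteq> W \<longrightarrow> PiE D V \<inter> PiE D W = {}"
  proof (intro ballI impI)
    fix V W assume V: "V \<in> (\<Union>i\<in>I. T i)" and W: "W \<in> (\<Union>i\<in>I. T i)" and ne: "V \<noteq> W"
    then obtain i j where i: "i \<in> I" "V \<in> T i" and j: "j \<in> I" "W \<in> T j" by auto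
    show "PiE D V \<inter> PiE D W = {}"
    proof (cases "i = j")
      case True then show ?thesis using assms(2) i j ne unfolding til_def by auto
    next
      case False
      have "R i = (\<Union>V\<in>T i. PiE D V)" "R j = (\<Union>V\<in>T j. PiE D V)"
        using assms(2) i j unfolding til_def by auto
      then have "PiE D V \<subseteq> R i" "PiE D W \<subseteq> R j" using i j by blast+
      then show ?thesis using assms(3) i j False by blast
    qed
  qed
qed

lemma PiE_split:
  assumes "t \<in> D" "A t = (\<Union>i\<in>I. B i)"
  shows "PiE D A = (\<Union>i\<in>I. PiE D (A(t:=B i)))"
proof
  show "PiE D A \<subseteq> (\<Union>i\<in>I. PiE D (A(t:=B i)))"
  proof
    fix x assume x: "x \<in> PiE D A"
    then have "x t \<in> A t" using assms by auto
    then obtain i where "i \<in> I" "x t \<in> B i" using assms by auto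
    then show "x \<in> (\<Union>i\<in>I. PiE D (A(t:=B i)))" using x by (auto simp: PiE_iff)
  qed
  show "(\<Union>i\<in>I. PiE D (A(t:=B i))) \<subseteq> PiE D A"
  proof
    fix x assume "x \<in> (\<Union>i\<in>I. PiE D (A(t:=B i)))"
    then obtain i where i: "i \<in> I" "x \<in> PiE D (A(t:=B i))" by auto
    have "\<forall>s\<in>D. x s \<in> A s"
    proof
      fix s assume s: "s \<in> D"
      show "x s \<in> A s"
      proof (cases "s = t")
        case True
        have "x t \<in> B i" using i assms(1) by (auto simp: PiE_iff)
        then show ?thesis using True i(1) assms(2) by auto
      next
        case False then show ?thesis using i s by (auto simp: PiE_iff)
      qed
    qed
    then show "x \<in> PiE D A" using i by (auto simp: PiE_iff)
  qed
qed

lemma PiE_split_disj: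
  assumes "t \<in> D" "B i \<inter> B j = {}"
  shows "PiE D (A(t:=B i)) \<inter> PiE D (A(t:=B j)) = {}"
proof (rule ccontr)
  assume "PiE D (A(t:=B i)) \<inter> PiE D (A(t:=B j)) \<noteq> {}"
  then obtain x where "x \<in> PiE D (A(t:=B i))" "x \<in> PiE D (A(t:=B j))" by auto
  then have "x t \<in> B i" "x t \<in> B j" using assms(1) by (auto simp: PiE_iff)
  then show False using assms(2) by auto
qed

lemma PiE_insert_iff:
  assumes "t \<notin> D"
  shows "x \<in> PiE (insert t D) (B(t:=C)) \<longleftrightarrow> x t \<in> C \<and> x(t:=undefined) \<in> PiE D B"
  using assms by (auto simp: PiE_iff extensional_def)

lemma til_extend:
  assumes "t \<notin> D" "til D (PiE D A) J h T" "j \<notin> J" "card C = h j"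
  shows "til (insert t D) (PiE (insert t D) (A(t:=C))) (insert j J) h ((\<lambda>V. V(t:=C)) ` T)"
  unfolding til_def
proof (intro conjI)
  show "finite ((\<lambda>V. V(t:=C)) ` T)" using assms unfolding til_def by auto
  show "\<forall>V\<in>(\<lambda>V. V(t:=C)) ` T. blk (insert t D) (insert j J) h V"
  proof
    fix V' assume "V' \<in> (\<lambda>V. V(t:=C)) ` T"
    then obtain V where V: "V \<in> T" "V' = V(t:=C)" by auto
    then obtain g where g: "bij_betw g D J" "\<forall>s\<in>D. card (V s) = h (g s)"
      using assms unfolding til_def blk_def by auto
    have "bij_betw (g(t:=j)) (insert t D) (insert j J)"
      using g(1) assms(1,3) by (auto simp: bij_betw_def inj_on_def image_def)
    moreover have "\<forall>s\<in>insert t D. card (V' s) = h ((g(t:=j)) s)"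
      using g(2) V assms by auto
    ultimately show "blk (insert t D) (insert j J) h V'" unfolding blk_def by blast
  qed
  show "\<forall>V\<in>(\<lambda>V. V(t:=C)) ` T. \<forall>W\<in>(\<lambda>V. V(t:=C)) ` T. V \<noteq> W \<longrightarrow>
          PiE (insert t D) V \<inter> PiE (insert t D) W = {}"
  proof (intro ballI impI)
    fix V' W' assume "V' \<in> (\<lambda>V. V(t:=C)) ` T" "W' \<in> (\<lambda>V. V(t:=C)) ` T" and ne: "V' \<noteq> W'"
    then obtain V W where V: "V \<in> T" "V' = V(t:=C)" and W: "W \<in> T" "W' = W(t:=C)" by auto
    with ne have "V \<noteq> W" by auto
    then have d: "PiE D V \<inter> PiE D W = {}" using V W assms unfolding til_def by auto
    show "PiE (insert t D) V' \<inter> PiE (insert t D) W' = {}"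
    proof (rule ccontr)
      assume "PiE (insert t D) V' \<inter> PiE (insert t D) W' \<noteq> {}"
      then obtain x where x1: "x \<in> PiE (insert t D) (V(t:=C))" and x2: "x \<in> PiE (insert t D) (W(t:=C))"
        using V W by auto
      have "x(t:=undefined) \<in> PiE D V" using x1 unfolding PiE_insert_iff[OF assms(1)] by (rule conjunct2)
      moreover have "x(t:=undefined) \<in> PiE D W" using x2 unfolding PiE_insert_iff[OF assms(1)] by (rule conjunct2)
      ultimately show False using d by (metis IntI empty_iff)
    qed
  qed
  have U: "(\<Union>V\<in>T. PiE D V) = PiE D A" using assms unfolding til_def by auto
  show "(\<Union>V\<in>(\<lambda>V. V(t:=C)) ` T. PiE (insert t D) V) = PiE (insert t D) (A(t:=C))"
  proof
    show "(\<Union>V\<in>(\<lambda>V. V(t:=C)) ` T. PiE (insert t D) V) \<subseteq> PiE (insert t D) (A(t:=C))"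
    proof
      fix x assume "x \<in> (\<Union>V\<in>(\<lambda>V. V(t:=C)) ` T. PiE (insert t D) V)"
      then obtain V where V: "V \<in> T" "x \<in> PiE (insert t D) (V(t:=C))" by auto
      then have "x t \<in> C \<and> x(t:=undefined) \<in> PiE D V" unfolding PiE_insert_iff[OF assms(1)] by simp
      moreover have "PiE D V \<subseteq> PiE D A" using U V(1) by blast
      ultimately have "x t \<in> C \<and> x(t:=undefined) \<in> PiE D A" by blast
      then show "x \<in> PiE (insert t D) (A(t:=C))" unfolding PiE_insert_iff[OF assms(1)] .
    qed
    show "PiE (insert t D) (A(t:=C)) \<subseteq> (\<Union>V\<in>(\<lambda>V. V(t:=C)) ` T. PiE (insert t D) V)"
    proof
      fix x assume "x \<in> PiE (insert t D) (A(t:=C))"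
      then have xx: "x t \<in> C \<and> x(t:=undefined) \<in> PiE D A" unfolding PiE_insert_iff[OF assms(1)] .
      have "x(t:=undefined) \<in> (\<Union>V\<in>T. PiE D V)" using U xx by simp
      then obtain V where "V \<in> T" "x(t:=undefined) \<in> PiE D V" by blast
      then have "x \<in> PiE (insert t D) (V(t:=C))" using xx unfolding PiE_insert_iff[OF assms(1)] by simp
      then show "x \<in> (\<Union>V\<in>(\<lambda>V. V(t:=C)) ` T. PiE (insert t D) V)" using \<open>V \<in> T\<close> by auto
    qed
  qed
qed

lemma partition_card:
  "finite S \<Longrightarrow> card S = (\<Sum>i<(n::nat). c i) \<Longrightarrow> \<exists>P. (\<forall>i<n. P i \<subseteq> S \<and> card (P i) = c i) \<and>
     (\<forall>i<n. \<forall>j<n. i \<noteq> j \<longrightarrow> P i \<inter> P j = {}) \<and> (\<Union>i<n. P i) = S"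
proof (induction n arbitrary: S)
  case 0 then show ?case by auto
next
  case (Suc n)
  have "c n \<le> card S" using Suc.prems by simp
  then obtain B where B: "B \<subseteq> S" "card B = c n" "finite B" by (metis obtain_subset_with_card_n)
  have "card (S - B) = (\<Sum>i<n. c i)" using Suc.prems B by (simp add: card_Diff_subset)
  then obtain P where P: "\<forall>i<n. P i \<subseteq> S - B \<and> card (P i) = c i"
     "\<forall>i<n. \<forall>j<n. i \<noteq> j \<longrightarrow> P i \<inter> P j = {}" "(\<Union>i<n. P i) = S - B"
    using Suc.IH[of "S - B"] Suc.prems by auto
  let ?P = "P(n:=B)"
  have "\<forall>i<Suc n. ?P i \<subseteq> S \<and> card (?P i) = c i" using P B by (auto simp: less_Suc_eq)
  moreover have "\<forall>i<Suc n. \<forall>j<Suc n. i \<noteq> j \<longrightarrow> ?P i \<inter> ?P j = {}"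
    using P B by (auto simp: less_Suc_eq)
  moreover have "(\<Union>i<Suc n. ?P i) = S"
  proof -
    have "(\<Union>i<Suc n. ?P i) = B \<union> (\<Union>i<n. P i)" by (auto simp: lessThan_Suc)
    then show ?thesis using P B by auto
  qed
  ultimately show ?case by blast
qed

lemma sum_if_split: "(\<Sum>i<a+b. if i < a then x else y) = a * x + b * (y::nat)"
  by (induction b) auto

lemma Fq_add: "Fq q (k + Suc m) = Fq q (Suc k) * Fq q (Suc m) + Fq q k * Fq q m"
proof -
  have "Fq q (k + Suc m) = Fq q (Suc k) * Fq q (Suc m) + Fq q k * Fq q m \<and>
        Fq q (k + Suc (Suc m)) = Fq q (Suc k) * Fq q (Suc (Suc m)) + Fq q k * Fq q (Suc m)"
  proof (induction m)
    case 0 then show ?case by (simp add: algebra_simps)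
  next
    case (Suc m)
    have aux: "\<And>a b P Q R::nat. q * (a*P + b*Q) + (a*Q + b*R) = a*(q*P+Q) + b*(q*Q+R)"
      by (simp add: algebra_simps)
    have "Fq q (k + Suc (Suc (Suc m))) = q * Fq q (k + Suc (Suc m)) + Fq q (k + Suc m)"
      by (metis Fq.simps(3) add_Suc_right)
    also have "\<dots> = q * (Fq q (Suc k) * Fq q (Suc (Suc m)) + Fq q k * Fq q (Suc m))
       + (Fq q (Suc k) * Fq q (Suc m) + Fq q k * Fq q m)"
      using Suc.IH by (simp only:)
    also have "\<dots> = Fq q (Suc k) * (q * Fq q (Suc (Suc m)) + Fq q (Suc m)) + Fq q k * (q * Fq q (Suc m) + Fq q m)"
      by (rule aux)
    also have "\<dots> = Fq q (Suc k) * Fq q (Suc (Suc (Suc m))) + Fq q k * Fq q (Suc (Suc m))"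
      by (simp only: Fq.simps(3))
    finally have "Fq q (k + Suc (Suc (Suc m))) = Fq q (Suc k) * Fq q (Suc (Suc (Suc m))) + Fq q k * Fq q (Suc (Suc m))" .
    then show ?case using Suc.IH by blast
  qed
  then show ?thesis by simp
qed

lemma Fq_pos: "q \<ge> 1 \<Longrightarrow> j \<ge> 1 \<Longrightarrow> Fq q j \<ge> 1"
proof (induction j rule: less_induct)
  case (less j)
  show ?case
  proof (cases j)
    case 0 then show ?thesis using less by simp
  next
    case (Suc i)
    show ?thesis
    proof (cases i)
      case 0 then show ?thesis using Suc by simp
    next
      case (Suc i')
      have "Fq q (Suc i') \<ge> 1" using less \<open>j = Suc i\<close> Suc by simp
      then have "q * Fq q (Suc i') \<ge> 1" using less.prems by simp
      have "Fq q j = q * Fq q (Suc i') + Fq q i'" using \<open>j = Suc i\<close> Suc by simp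
      then show ?thesis using \<open>q * Fq q (Suc i') \<ge> 1\<close> by linarith
    qed
  qed
qed


lemma PiE_sub_coord:
  assumes "PiE D V \<subseteq> PiE D A" "PiE D V \<noteq> {}" "s \<in> D"
  shows "V s \<subseteq> A s"
proof
  fix y assume y: "y \<in> V s"
  obtain x where x: "x \<in> PiE D V" using assms(2) by auto
  have "x(s:=y) \<in> PiE D V" using x y assms(3) by (auto simp: PiE_iff extensional_def)
  then have "x(s:=y) \<in> PiE D A" using assms(1) by auto
  then show "y \<in> A s" using assms(3) by (auto simp: PiE_iff)
qed

lemma main_til:
  fixes A :: "nat \<Rightarrow> nat set" and D :: "nat set" and e :: "nat \<Rightarrow> nat"
  shows "finite D \<Longrightarrow> bij_betw e D {1..m} \<Longrightarrow> (\<forall>s\<in>D. finite (A s) \<and> card (A s) = Fq q (k + e s))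
    \<Longrightarrow> \<exists>T. til D (PiE D A) {1..m} (Fq q) T"
proof (induction k arbitrary: m D e A)
  case 0
  have "bij_betw e D {1..m} \<and> (\<forall>s\<in>D. card (A s) = Fq q (e s))" using 0 by auto
  then have "blk D {1..m} (Fq q) A" unfolding blk_def by blast
  then have "til D (PiE D A) {1..m} (Fq q) {A}" by (rule til_single)
  then show ?case ..
next
  case (Suc k)
  note IHk = Suc.IH
  have inner: "\<forall>(D::nat set) (e::nat\<Rightarrow>nat) (A::nat \<Rightarrow> nat set). finite D \<longrightarrow> bij_betw e D {1..m'} \<longrightarrow>
      (\<forall>s\<in>D. finite (A s) \<and> card (A s) = Fq q (Suc k + e s)) \<longrightarrow>
      (\<exists>T. til D (PiE D A) {1..m'} (Fq q) T)" for m'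
  proof (induction m')
    case 0
    show ?case
    proof (intro allI impI)
      fix D e and A :: "nat \<Rightarrow> nat set" assume "finite D" "bij_betw e (D::nat set) {1..0::nat}"
        "\<forall>s\<in>D. finite (A s) \<and> card (A s) = Fq q (Suc k + e s)"
      then have "D = {}" by (auto simp: bij_betw_def)
      then have "blk D {1..0} (Fq q) A" unfolding blk_def by (auto simp: bij_betw_def)
      then have "til D (PiE D A) {1..0} (Fq q) {A}" by (rule til_single)
      then show "\<exists>T. til D (PiE D A) {1..0} (Fq q) T" ..
    qed
  next
    case (Suc m)
    note IHm = Suc.IH
    show ?case
    proof (intro allI impI)
      fix D e and A :: "nat \<Rightarrow> nat set" assume fD: "finite D" and be: "bij_betw e (D::nat set) {1..Suc m}"
        and cA: "\<forall>s\<in>D. finite (A s) \<and> card (A s) = Fq q (Suc k + e s)"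
      have "Suc m \<in> e ` D" using be by (auto simp: bij_betw_def)
      then obtain t where t: "t \<in> D" "e t = Suc m" by auto
      define D' where "D' = D - {t}"
      have b1: "bij_betw e {t} {Suc m}" using t by (auto simp: bij_betw_def)
      have "bij_betw e (D - {t}) ({1..Suc m} - {Suc m})"
        by (rule bij_betw_DiffI[OF be b1]) (use t in auto)
      moreover have "{1..Suc m} - {Suc m} = {1..m}" by auto
      ultimately have bD': "bij_betw e D' {1..m}" unfolding D'_def by simp
      have fD': "finite D'" using fD unfolding D'_def by auto
      have tD': "t \<notin> D'" "insert t D' = D" using t unfolding D'_def by auto
      define n1 where "n1 = Fq q (Suc (Suc k))"
      define n2 where "n2 = Fq q m"
      define c where "c = (\<lambda>i. if i < n1 then Fq q (Suc m) else Fq q (Suc k))"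
      have "card (A t) = Fq q (Suc k + Suc m)" using cA t by auto
      also have "\<dots> = n1 * Fq q (Suc m) + n2 * Fq q (Suc k)"
        unfolding n1_def n2_def by (simp only: Fq_add) (simp add: mult.commute)
      also have "\<dots> = (\<Sum>i<n1+n2. c i)" unfolding c_def by (rule sum_if_split[symmetric])
      finally have cAt: "card (A t) = (\<Sum>i<n1+n2. c i)" .
      have fAt: "finite (A t)" using cA t by auto
      from partition_card[OF fAt cAt] obtain P where PP: "(\<forall>i<n1+n2. P i \<subseteq> A t \<and> card (P i) = c i) \<and>
        (\<forall>i<n1+n2. \<forall>j<n1+n2. i \<noteq> j \<longrightarrow> P i \<inter> P j = {}) \<and> (\<Union>i<n1+n2. P i) = A t" ..
      have P: "\<forall>i<n1+n2. P i \<subseteq> A t \<and> card (P i) = c i"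
        "\<forall>i<n1+n2. \<forall>j<n1+n2. i \<noteq> j \<longrightarrow> P i \<inter> P j = {}" "(\<Union>i<n1+n2. P i) = A t"
        using PP by auto
      have split: "PiE D A = (\<Union>i\<in>{..<n1+n2}. PiE D (A(t:=P i)))"
        by (rule PiE_split[where A=A and B=P and I="{..<n1+n2}", OF t(1) P(3)[symmetric]])
      have each: "\<forall>i\<in>{..<n1+n2}. \<exists>T. til D (PiE D (A(t:=P i))) {1..Suc m} (Fq q) T"
      proof
        fix i assume i: "i \<in> {..<n1+n2}"
        show "\<exists>T. til D (PiE D (A(t:=P i))) {1..Suc m} (Fq q) T"
        proof (cases "i < n1")
          case True
          have cD': "\<forall>s\<in>D'. finite (A s) \<and> card (A s) = Fq q (Suc k + e s)" using cA unfolding D'_def by auto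
          note X = IHm[THEN spec[of _ D'], THEN spec[of _ e], THEN spec[of _ A]]
          have "\<exists>T. til D' (PiE D' A) {1..m} (Fq q) T" by (rule mp[OF mp[OF mp[OF X fD'] bD'] cD'])
          then obtain T' where T': "til D' (PiE D' A) {1..m} (Fq q) T'" ..
          have cP: "card (P i) = Fq q (Suc m)" using P(1) i True unfolding c_def by auto
          have "til (insert t D') (PiE (insert t D') (A(t:=P i))) (insert (Suc m) {1..m}) (Fq q)
                 ((\<lambda>V. V(t:=P i)) ` T')"
            by (rule til_extend[OF tD'(1) T' _ cP]) auto
          moreover have "insert (Suc m) {1..m} = {1..Suc m}" by auto
          ultimately show ?thesis using tD'(2) by auto
        next
          case False
          define e' where "e' = (\<lambda>s. if s = t then 1 else Suc (e s))"
          have inj: "inj_on e' D"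
          proof (rule inj_onI)
            fix x y assume xy: "x \<in> D" "y \<in> D" "e' x = e' y"
            have "e x \<ge> 1" "e y \<ge> 1" using be xy by (auto simp: bij_betw_def)
            have inje: "inj_on e D" using be by (simp add: bij_betw_def)
            show "x = y"
            proof (cases "x = t")
              case True
              show ?thesis
              proof (cases "y = t")
                case False then show ?thesis using xy \<open>x = t\<close> \<open>e y \<ge> 1\<close> unfolding e'_def by simp
              qed (use True in simp)
            next
              case False
              show ?thesis
              proof (cases "y = t")
                case True then show ?thesis using xy \<open>x \<noteq> t\<close> \<open>e x \<ge> 1\<close> unfolding e'_def by simp
              next
                case False
                then have "e x = e y" using xy \<open>x \<noteq> t\<close> unfolding e'_def by simp
                then show ?thesis using inj_onD[OF inje] xy by blast
              qed
            qed
          qed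
          have "e' ` D = {1..Suc m}"
          proof
            show "e' ` D \<subseteq> {1..Suc m}"
            proof
              fix y assume "y \<in> e' ` D"
              then obtain x where x: "x \<in> D" "y = e' x" by auto
              show "y \<in> {1..Suc m}"
              proof (cases "x = t")
                case True then show ?thesis using x unfolding e'_def by auto
              next
                case False
                then have "e x \<in> {1..m}" using bD' x unfolding D'_def bij_betw_def by auto
                then show ?thesis using x False unfolding e'_def by auto
              qed
            qed
            show "{1..Suc m} \<subseteq> e' ` D"
            proof
              fix y assume y: "y \<in> {1..Suc m}"
              show "y \<in> e' ` D"
              proof (cases "y = 1")
                case True then show ?thesis using t unfolding e'_def by force
              next
                case False
                then have "y - 1 \<in> {1..m}" using y by auto
                then have "y - 1 \<in> e ` D'" using bD' by (simp add: bij_betw_def)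
                then obtain x where "x \<in> D'" "e x = y - 1" by (rule imageE) simp
                then have "x \<in> D" "e' x = y" using False y unfolding e'_def D'_def by auto
                then show ?thesis by force
              qed
            qed
          qed
          with inj have be': "bij_betw e' D {1..Suc m}" by (simp add: bij_betw_def)
          have fP: "finite (P i)" using P(1) i cA t finite_subset by blast
          have cP: "card (P i) = Fq q (Suc k)" using P(1) i False unfolding c_def by auto
          have "\<forall>s\<in>D. finite ((A(t:=P i)) s) \<and> card ((A(t:=P i)) s) = Fq q (k + e' s)"
          proof
            fix s assume s: "s \<in> D"
            show "finite ((A(t:=P i)) s) \<and> card ((A(t:=P i)) s) = Fq q (k + e' s)"
            proof (cases "s = t")
              case True then show ?thesis using fP cP unfolding e'_def by simp
            next
              case False
              have "Fq q (k + e' s) = Fq q (Suc k + e s)" using False unfolding e'_def by simp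
              then show ?thesis using False cA s by simp
            qed
          qed
          from IHk[OF fD be' this] show ?thesis .
        qed
      qed
      from bchoice[OF this] obtain TT where TT: "\<forall>i\<in>{..<n1+n2}. til D (PiE D (A(t:=P i))) {1..Suc m} (Fq q) (TT i)"
        ..
      have disj: "\<forall>i\<in>{..<n1+n2}. \<forall>j\<in>{..<n1+n2}. i \<noteq> j \<longrightarrow>
                   PiE D (A(t:=P i)) \<inter> PiE D (A(t:=P j)) = {}"
      proof (intro ballI impI)
        fix i j assume "i \<in> {..<n1+n2}" "j \<in> {..<n1+n2}" "i \<noteq> j"
        then have "P i \<inter> P j = {}" using P(2) by simp
        then show "PiE D (A(t:=P i)) \<inter> PiE D (A(t:=P j)) = {}" by (rule PiE_split_disj[OF t(1)])
      qed
      have "til D (\<Union>i\<in>{..<n1+n2}. PiE D (A(t:=P i))) {1..Suc m} (Fq q) (\<Union>i\<in>{..<n1+n2}. TT i)"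
        by (rule til_UN[OF _ TT disj]) simp
      then show "\<exists>T. til D (PiE D A) {1..Suc m} (Fq q) T" using split by auto
    qed
  qed
  note Y = inner[of m, THEN spec[of _ D], THEN spec[of _ e], THEN spec[of _ A]]
  show ?case by (rule mp[OF mp[OF mp[OF Y Suc.prems(1)] Suc.prems(2)] Suc.prems(3)])
qed

theorem mainTheorem8:
  fixes q k n :: nat
  assumes "q \<ge> 1" and "k < n"
  shows "\<exists>T. is_tiling (Fq q) (k + 1) n T"
proof -
  define D where "D = {k+1..n}"
  define e where "e = (\<lambda>s::nat. s - k)"
  have fD: "finite D" unfolding D_def by simp
  have be: "bij_betw e D {1..n-k}" unfolding D_def e_def
    by (rule bij_betw_byWitness[where f'="\<lambda>i. i + k"]) auto
  have cl: "\<forall>s\<in>D. finite (cobweb_level (Fq q) s) \<and> card (cobweb_level (Fq q) s) = Fq q (k + e s)"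
    unfolding D_def e_def cobweb_level_def by auto
  from main_til[OF fD be cl] obtain T where T: "til D (PiE D (cobweb_level (Fq q))) {1..n-k} (Fq q) T" ..
  have eq: "n - (k+1) + 1 = n - k" using assms by simp
  have U: "(\<Union>V\<in>T. PiE D V) = PiE D (cobweb_level (Fq q))" using T unfolding til_def by blast
  have "is_tiling (Fq q) (k+1) n T"
    unfolding is_tiling_def
  proof (intro conjI)
    show "finite T" using T unfolding til_def by blast
    show "\<forall>V\<in>T. \<forall>W\<in>T. V \<noteq> W \<longrightarrow> block_chains (k + 1) n V \<inter> block_chains (k + 1) n W = {}"
      using T unfolding til_def block_chains_def D_def by blast
    show "(\<Union>V\<in>T. block_chains (k + 1) n V) = layer_max_chains (Fq q) (k + 1) n"
      using U unfolding block_chains_def layer_max_chains_def D_def by simp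
    show "\<forall>V\<in>T. is_block (Fq q) (k + 1) n V"
    proof
      fix V assume V: "V \<in> T"
      then have "blk D {1..n-k} (Fq q) V" using T unfolding til_def by blast
      then obtain g where g: "bij_betw g D {1..n-k}" "\<forall>s\<in>D. card (V s) = Fq q (g s)"
        unfolding blk_def by blast
      define \<sigma> where "\<sigma> = (\<lambda>i. if i \<in> {1..n-k} then g (k+i) else i)"
      have "bij_betw (\<lambda>i. k+i) {1..n-k} D" unfolding D_def
        by (rule bij_betw_byWitness[where f'="\<lambda>s. s-k"]) auto
      then have "bij_betw (g \<circ> (\<lambda>i. k+i)) {1..n-k} {1..n-k}" using g(1) by (rule bij_betw_trans)
      moreover have "bij_betw \<sigma> {1..n-k} {1..n-k} = bij_betw (g \<circ> (\<lambda>i. k+i)) {1..n-k} {1..n-k}"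
        by (rule bij_betw_cong) (simp add: \<sigma>_def)
      ultimately have "bij_betw \<sigma> {1..n-k} {1..n-k}" by simp
      then have perm: "\<sigma> permutes {1..n-k}"
        by (rule bij_imp_permutes) (auto simp: \<sigma>_def)
      have ne: "\<forall>s\<in>D. V s \<noteq> {}"
      proof
        fix s assume s: "s \<in> D"
        have "g s \<in> {1..n-k}" using g(1) s by (auto simp: bij_betw_def)
        then have "Fq q (g s) \<ge> 1" using Fq_pos[OF assms(1)] by simp
        then have "card (V s) \<noteq> 0" using g(2) s by simp
        then show "V s \<noteq> {}" by auto
      qed
      then have neP: "PiE D V \<noteq> {}" by (simp add: PiE_eq_empty_iff)
      have sub: "PiE D V \<subseteq> PiE D (cobweb_level (Fq q))" using U V by blast
      have "\<forall>i\<in>{1..n-k}. V (k + i) \<subseteq> cobweb_level (Fq q) (k + i) \<and> card (V (k + i)) = Fq q (\<sigma> i)"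
      proof
        fix i assume i: "i \<in> {1..n-k}"
        then have kiD: "k + i \<in> D" unfolding D_def by auto
        show "V (k + i) \<subseteq> cobweb_level (Fq q) (k + i) \<and> card (V (k + i)) = Fq q (\<sigma> i)"
          using PiE_sub_coord[OF sub neP kiD] g(2) kiD i unfolding \<sigma>_def by simp
      qed
      then show "is_block (Fq q) (k + 1) n V"
        unfolding is_block_def eq using perm by auto
    qed
  qed
  then show ?thesis ..
qed

end
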